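(* Let $A$ be the $N\times N$ discretization matrix described below, partitioned as $A = \begin{bmatrix} A_{LL} & A_{LI} \\ A_{IL} & A_{II}\end{bmatrix}$. Then \[ \left(A_{IL}A_{LL}^{-1}A_{LI}\right)_{1,1} \leq |a^{}_{N_L+1,N_L}| = \left(A_{IL}\right)_{1,N_L}. \]
   Context: Consider $-\varepsilon u'' - c(x)u' + r(x)u = f$ on $(0,1)$, $u(0)=u(1)=0$, with $0<\underline{C}\le c(x)\le\overline{C}$ and $r(x)\ge 0$. On a mesh $0=x_0<x_1<\dots<x_N=1$ with $h_i = x_i - x_{i-1}$, $\bar h_i = (h_i+h_{i+1})/2$, $c_i=c(x_i)$, $r_i=r(x_i)$, $A=(a_{i,j})$ is the tridiagonal upwind finite-difference matrix whose row $i$ has stencil $\left[ -\frac{\varepsilon}{h_i\bar h_i} , \frac{\varepsilon}{\bar h_i}\left(\frac{1}{h_i} + \frac{1}{h_{i+1}}\right) + \frac{c_i}{h_{i+1}} + r_i , -\frac{\varepsilon}{h_{i+1}\bar h_i} -\frac{c_i}{h_{i+1}} \right]$. The unknowns are split into a layer set $L$ (first $N_L$ indices, meshwidths $\mathcal{O}(\varepsilon/N)$, including the transition point) and an interior set $I$ (remaining $N_I$ indices), $N=N_L+N_I$, giving the $2\times2$ block partition above; $A_{IL}$ and $A_{LI}$ each have a single nonzero entry, $(A_{IL})_{1,N_L}=a_{N_L+1,N_L}$ and $(A_{LI})_{N_L,1}=a_{N_L,N_L+1}$. *)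

theory Defs
  imports "Jordan_Normal_Form.Matrix"
begin

definition mesh_h :: "(nat \<Rightarrow> real) \<Rightarrow> nat \<Rightarrow> real" where
  "mesh_h x i = x i - x (i - 1)"

definition mesh_hbar :: "(nat \<Rightarrow> real) \<Rightarrow> nat \<Rightarrow> real" where
  "mesh_hbar x i = (mesh_h x i + mesh_h x (i + 1)) / 2"

text \<open>Entry a_{i,j} (1-based, i,j = index of the interior mesh node) of the
  upwind finite-difference matrix.\<close>
definition upwind_entry ::
  "real \<Rightarrow> (real \<Rightarrow> real) \<Rightarrow> (real \<Rightarrow> real) \<Rightarrow> (nat \<Rightarrow> real) \<Rightarrow> nat \<Rightarrow> nat \<Rightarrow> real" where
  "upwind_entry eps c r x i j =
     (if j + 1 = i then - eps / (mesh_h x i * mesh_hbar x i)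
      else if j = i then eps / mesh_hbar x i * (1 / mesh_h x i + 1 / mesh_h x (i + 1))
                         + c (x i) / mesh_h x (i + 1) + r (x i)
      else if j = i + 1 then - eps / (mesh_h x (i + 1) * mesh_hbar x i) - c (x i) / mesh_h x (i + 1)
      else 0)"

text \<open>The N x N matrix A (JNF matrices are 0-based: entry (i,j) is a_{i+1,j+1}).\<close>
definition upwind_mat ::
  "real \<Rightarrow> (real \<Rightarrow> real) \<Rightarrow> (real \<Rightarrow> real) \<Rightarrow> (nat \<Rightarrow> real) \<Rightarrow> nat \<Rightarrow> real mat" where
  "upwind_mat eps c r x N = mat N N (\<lambda>(i, j). upwind_entry eps c r x (i + 1) (j + 1))"

end

theory Submission
  imports Defs "Jordan_Normal_Form.Determinant"
begin

theorem corollary2p4: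
  fixes eps Cl Cu :: real and c r :: "real \<Rightarrow> real" and x :: "nat \<Rightarrow> real"
    and NL NI :: nat and A_LL A_LI A_IL A_II :: "real mat"
  assumes eps: "eps > 0"
    and Cl: "0 < Cl"
    and c_bounds: "\<And>t. 0 \<le> t \<Longrightarrow> t \<le> 1 \<Longrightarrow> Cl \<le> c t \<and> c t \<le> Cu"
    and r_nonneg: "\<And>t. 0 \<le> t \<Longrightarrow> t \<le> 1 \<Longrightarrow> r t \<ge> 0"
    and NL: "NL \<ge> 1" and NI: "NI \<ge> 1"
    and x0: "x 0 = 0" and x1: "x (NL + NI + 1) = 1"
    and mesh: "\<And>i. i \<le> NL + NI \<Longrightarrow> x i < x (i + 1)"
    and blocks: "split_block (upwind_mat eps c r x (NL + NI)) NL NL = (A_LL, A_LI, A_IL, A_II)"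
  shows "invertible_mat A_LL \<and>
    (\<forall>B. inverts_mat A_LL B \<and> inverts_mat B A_LL \<longrightarrow>
       (A_IL * B * A_LI) $$ (0, 0) \<le> \<bar>upwind_entry eps c r x (NL + 1) NL\<bar>
     \<and> \<bar>upwind_entry eps c r x (NL + 1) NL\<bar> = \<bar>A_IL $$ (0, NL - 1)\<bar>)"
proof -
  define N where "N = NL + NI"
  define E where "E = upwind_entry eps c r x"
  define h where "h = mesh_h x"
  define hb where "hb = mesh_hbar x"
  define lf where "lf i = eps / (h i * hb i)" for i
  define uf where "uf i = eps / (h (i+1) * hb i) + c (x i) / h (i+1)" for i
  have mono: "x i \<le> x j" if "i \<le> j" "j \<le> N+1" for i j
    using that
  proof (induction j)
    case 0 then show ?case by simp
  next
    case (Suc j)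
    show ?case
    proof (cases "i = Suc j")
      case True then show ?thesis by simp
    next
      case False
      then have "x i \<le> x j" using Suc by auto
      moreover have "x j < x (j+1)" using mesh[of j] Suc.prems N_def by auto
      ultimately show ?thesis by simp
    qed
  qed
  have x01: "0 \<le> x i \<and> x i \<le> 1" if "i \<le> N+1" for i
    using mono[of 0 i] mono[of i "N+1"] that x0 x1 N_def by auto
  have hpos: "h i > 0" if "1 \<le> i" "i \<le> N+1" for i
    using mesh[of "i-1"] that unfolding h_def mesh_h_def N_def by auto
  have hbpos: "hb i > 0" if "1 \<le> i" "i \<le> N" for i
    using hpos[of i] hpos[of "i+1"] that unfolding hb_def mesh_hbar_def h_def by auto
  have cpos: "c (x i) > 0" if "i \<le> N+1" for i
    using c_bounds[of "x i"] x01[OF that] Cl by auto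
  have rnn: "r (x i) \<ge> 0" if "i \<le> N+1" for i using r_nonneg x01[OF that] by auto
  have lfpos: "lf i > 0" if "1 \<le> i" "i \<le> N" for i
    using hpos[of i] hbpos[of i] that eps unfolding lf_def by auto
  have ufpos: "uf i > 0" if "1 \<le> i" "i \<le> N" for i
    using hpos[of "i+1"] hbpos[of i] cpos[of i] that eps unfolding uf_def
    by (auto intro!: add_pos_pos divide_pos_pos)
  have Esub: "E (k+1) k = - lf (k+1)" for k
    unfolding E_def upwind_entry_def lf_def h_def hb_def by simp
  have Esup: "E (k+1) (k+2) = - uf (k+1)" for k
    unfolding E_def upwind_entry_def uf_def h_def hb_def by simp
  have Ediag: "E (k+1) (k+1) = lf (k+1) + uf (k+1) + r (x (k+1))" if "k+1 \<le> N" for k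
    using hpos[of "k+1"] hpos[of "k+2"] hbpos[of "k+1"] that
    unfolding E_def upwind_entry_def uf_def lf_def h_def hb_def by (simp add: field_simps)
  have Ezero: "E (k+1) (j+1) = 0" if "j+1 \<noteq> k" "j \<noteq> k" "j \<noteq> k+1" for k j
    using that unfolding E_def upwind_entry_def by auto
  define M where "M = upwind_mat eps c r x (NL + NI)"
  have Mdim: "dim_row M = NL + NI" "dim_col M = NL + NI" by (simp_all add: M_def upwind_mat_def)
  have Mentry: "M $$ (i,j) = E (i+1) (j+1)" if "i < NL+NI" "j < NL+NI" for i j
    using that by (simp add: M_def upwind_mat_def E_def)
  have ALLdef: "A_LL = mat NL NL (\<lambda>ij. M $$ ij)"
    and AILdef: "A_IL = mat NI NL (\<lambda>(i,j). M $$ (i+NL, j))"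
    and ALIdef: "A_LI = mat NL NI (\<lambda>(i,j). M $$ (i, j+NL))"
    using blocks unfolding M_def[symmetric] by (auto simp: split_block_def Let_def Mdim)
  have ALLc: "A_LL \<in> carrier_mat NL NL" by (simp add: ALLdef)
  have AILc: "A_IL \<in> carrier_mat NI NL" by (simp add: AILdef)
  have ALIc: "A_LI \<in> carrier_mat NL NI" by (simp add: ALIdef)
  have ALL: "A_LL $$ (i,j) = E (i+1) (j+1)" if "i < NL" "j < NL" for i j
    using that by (simp add: ALLdef Mentry)
  have AIL: "A_IL $$ (0,j) = E (NL+1) (j+1)" if "j < NL" for j
    using that NI by (simp add: AILdef Mentry)
  have ALI: "A_LI $$ (j,0) = E (j+1) (NL+1)" if "j < NL" for j
    using that NI by (simp add: ALIdef Mentry)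
  define D where "D k = E (k+1) (k+1)" for k
  define p where "p = rec_nat (D 0) (\<lambda>k pk. D (Suc k) - lf (k+2) * uf (k+1) / pk)"
  have p0: "p 0 = D 0" by (simp add: p_def)
  have pS: "p (Suc k) = D (Suc k) - lf (k+2) * uf (k+1) / p k" for k by (simp add: p_def)
  have ppos: "p k > uf (k+1)" if "k+1 \<le> N" for k
    using that
  proof (induction k)
    case 0
    then show ?case using lfpos[of 1] rnn[of 1] Ediag[of 0] by (simp add: p0 D_def)
  next
    case (Suc k)
    have IH: "p k > uf (k+1)" using Suc by auto
    have u: "uf (k+1) > 0" using ufpos[of "k+1"] Suc.prems by auto
    have l: "lf (k+2) > 0" using lfpos[of "k+2"] Suc.prems by auto
    have "uf (k+1) / p k < 1" using IH u by auto
    then have "lf (k+2) * uf (k+1) / p k < lf (k+2)"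
      using mult_strict_left_mono[OF _ l, of "uf (k+1) / p k" 1] by simp
    moreover have "D (Suc k) = lf (k+2) + uf (k+2) + r (x (k+2))"
      using Ediag[of "Suc k"] Suc.prems by (simp add: D_def)
    moreover have "r (x (k+2)) \<ge> 0" using rnn[of "k+2"] Suc.prems by auto
    ultimately show ?case by (simp add: pS)
  qed
  have pnz: "p k \<noteq> 0" if "k+1 \<le> N" for k
    using ppos[OF that] ufpos[of "k+1"] that by auto
  have row: "(A_LL *\<^sub>v y) $ k = (if 0 < k then - lf (k+1) * y $ (k-1) else 0) + D k * y $ k
      + (if k+1 < NL then - uf (k+1) * y $ (k+1) else 0)"
    if y: "y \<in> carrier_vec NL" and k: "k < NL" for y k
  proof -
    have "(A_LL *\<^sub>v y) $ k = (\<Sum>j\<in>{0..<NL}. A_LL $$ (k,j) * y $ j)"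
      using ALLc y k by (simp add: scalar_prod_def)
    also have "\<dots> = (\<Sum>j\<in>{0..<NL}. (if 0 < k \<and> j = k - 1 then - lf (k+1) * y $ (k-1) else 0)
       + (if j = k then D k * y $ k else 0) + (if j = k+1 then - uf (k+1) * y $ (k+1) else 0))"
    proof (rule sum.cong)
      fix j assume j: "j \<in> {0..<NL}"
      show "A_LL $$ (k,j) * y $ j = (if 0 < k \<and> j = k - 1 then - lf (k+1) * y $ (k-1) else 0)
       + (if j = k then D k * y $ k else 0) + (if j = k+1 then - uf (k+1) * y $ (k+1) else 0)"
        using ALL[of k j] j k Esub[of k] Esup[of k] Ezero[of j k]
        by (cases "j+1 = k"; cases "j = k"; cases "j = k+1"; auto simp: D_def)
    qed simp
    also have "\<dots> = (if 0 < k then - lf (k+1) * y $ (k-1) else 0) + D k * y $ k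
      + (if k+1 < NL then - uf (k+1) * y $ (k+1) else 0)"
      using k by (simp add: sum.distrib)
    finally show ?thesis .
  qed
  have elim: "p k * y $ k - uf (k+1) * y $ (k+1) = 0"
    if y: "y \<in> carrier_vec NL" and z: "\<And>k. k + 1 < NL \<Longrightarrow> (A_LL *\<^sub>v y) $ k = 0"
      and k: "k + 1 < NL" for y k
    using k
  proof (induction k)
    case 0
    then show ?case using row[OF y, of 0] z[of 0] by (simp add: p0)
  next
    case (Suc k)
    have IH: "p k * y $ k = uf (k+1) * y $ (k+1)" using Suc by auto
    have pk: "p k \<noteq> 0" using pnz[of k] Suc.prems N_def by auto
    have yk: "y $ k = uf (k+1) * y $ (k+1) / p k" using IH pk by (simp add: field_simps)
    have "0 = - lf (k+2) * y $ k + D (Suc k) * y $ (Suc k) - uf (k+2) * y $ (k+2)"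
      using row[OF y, of "Suc k"] z[of "Suc k"] Suc.prems by simp
    then show ?case unfolding pS yk by (simp add: algebra_simps)
  qed
  have last: "(A_LL *\<^sub>v y) $ (NL - 1) = p (NL - 1) * y $ (NL - 1)"
    if y: "y \<in> carrier_vec NL" and z: "\<And>k. k + 1 < NL \<Longrightarrow> (A_LL *\<^sub>v y) $ k = 0" for y
  proof (cases NL)
    case 0 then show ?thesis using NL by simp
  next
    case (Suc m)
    show ?thesis
    proof (cases m)
      case 0 then show ?thesis using row[OF y, of 0] Suc by (simp add: p0)
    next
      case (Suc m')
      have IH: "p m' * y $ m' = uf (m'+1) * y $ (m'+1)" using elim[OF y z, of m'] Suc \<open>NL = Suc m\<close> by auto
      have pk: "p m' \<noteq> 0" using pnz[of m'] Suc \<open>NL = Suc m\<close> N_def by auto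
      have yk: "y $ m' = uf (m'+1) * y $ (m'+1) / p m'" using IH pk by (simp add: field_simps)
      have "(A_LL *\<^sub>v y) $ (NL - 1) = - lf (m'+2) * y $ m' + D (Suc m') * y $ (Suc m')"
        using row[OF y, of "Suc m'"] Suc \<open>NL = Suc m\<close> by simp
      then show ?thesis using Suc \<open>NL = Suc m\<close> unfolding yk by (simp add: pS[of m'] algebra_simps)
    qed
  qed
  have detnz: "det A_LL \<noteq> 0"
  proof
    assume "det A_LL = 0"
    then obtain v where v: "v \<in> carrier_vec NL" "v \<noteq> 0\<^sub>v NL" "A_LL *\<^sub>v v = 0\<^sub>v NL"
      using det_0_iff_vec_prod_zero_field[OF ALLc] by auto
    have z: "(A_LL *\<^sub>v v) $ k = 0" if "k < NL" for k using v that by simp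
    have pl: "p (NL - 1) \<noteq> 0" using pnz[of "NL - 1"] NL NI N_def by auto
    have vl: "v $ (NL - 1) = 0" using last[OF v(1) z] z[of "NL - 1"] pl NL by simp
    have vall: "v $ (NL - 1 - m) = 0" if "m < NL" for m
      using that
    proof (induction m)
      case 0 then show ?case using vl by simp
    next
      case (Suc m)
      define k where "k = NL - 1 - Suc m"
      have k1: "k + 1 = NL - 1 - m" "k + 1 < NL" using Suc.prems by (auto simp: k_def)
      have "p k * v $ k = 0" using elim[OF v(1) z k1(2)] Suc k1 by auto
      moreover have "p k \<noteq> 0" using pnz[of k] k1 N_def by auto
      ultimately show ?case by (simp add: k_def)
    qed
    have "v = 0\<^sub>v NL"
    proof (intro eq_vecI)
      fix i assume i: "i < dim_vec (0\<^sub>v NL)"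
      then have "v $ (NL - 1 - (NL - 1 - i)) = 0" using vall[of "NL - 1 - i"] NL by simp
      then show "v $ i = 0\<^sub>v NL $ i" using i by simp
    qed (use v in simp)
    then show False using v by simp
  qed
  have inv: "invertible_mat A_LL"
  proof -
    from det_non_zero_imp_unit[OF ALLc detnz, of "()", unfolded Units_def ring_mat_def]
    obtain B where "B \<in> carrier_mat NL NL" "A_LL * B = 1\<^sub>m NL" "B * A_LL = 1\<^sub>m NL" by auto
    then show ?thesis using ALLc unfolding invertible_mat_def inverts_mat_def square_mat.simps by auto
  qed
  have main: "(A_IL * B * A_LI) $$ (0, 0) \<le> \<bar>E (NL + 1) NL\<bar> \<and> \<bar>E (NL + 1) NL\<bar> = \<bar>A_IL $$ (0, NL - 1)\<bar>"
    if AB: "A_LL * B = 1\<^sub>m (dim_row A_LL)" and BA: "B * A_LL = 1\<^sub>m (dim_row B)" for B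
  proof -
    have "dim_col B = dim_col (A_LL * B)" by simp
    also have "\<dots> = NL" unfolding AB using ALLc by simp
    finally have cB: "dim_col B = NL" .
    have "dim_row B = dim_col (B * A_LL)" unfolding BA by simp
    also have "\<dots> = dim_col A_LL" by (rule index_mult_mat(3))
    also have "\<dots> = NL" using ALLc by blast
    finally have rB: "dim_row B = NL" .
    have Bc: "B \<in> carrier_mat NL NL" unfolding carrier_mat_def using cB rB by blast
    define y where "y = col B (NL - 1)"
    have y: "y \<in> carrier_vec NL" unfolding y_def carrier_vec_def using rB by simp
    have Ay: "(A_LL *\<^sub>v y) $ k = (if k = NL - 1 then 1 else 0)" if "k < NL" for k
    proof -
      have "(A_LL *\<^sub>v y) $ k = (A_LL * B) $$ (k, NL - 1)"
        using that ALLc Bc NL by (simp add: y_def)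
      then show ?thesis using AB ALLc that NL by simp
    qed
    have "p (NL - 1) * y $ (NL - 1) = 1"
      using last[OF y] Ay[of "NL - 1"] Ay NL by auto
    then have yl: "B $$ (NL - 1, NL - 1) = 1 / p (NL - 1)"
      using Bc NL pnz[of "NL - 1"] NI N_def by (simp add: y_def field_simps)
    have pl: "p (NL - 1) > uf NL" using ppos[of "NL - 1"] NL NI N_def by auto
    have ul: "uf NL > 0" using ufpos[of NL] NL NI N_def by auto
    have ll: "lf (NL + 1) > 0" using lfpos[of "NL+1"] NL NI N_def by auto
    have EL: "E (NL+1) NL = - lf (NL + 1)" using Esub[of NL] by simp
    have EU: "E NL (NL+1) = - uf NL" using Esup[of "NL - 1"] NL by simp
    have ILB: "(A_IL * B) $$ (0, j) = E (NL+1) NL * B $$ (NL - 1, j)" if j: "j < NL" for j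
    proof -
      have "(A_IL * B) $$ (0, j) = (\<Sum>k\<in>{0..<NL}. A_IL $$ (0,k) * B $$ (k, j))"
        using AILc Bc j NI by (simp add: scalar_prod_def)
      also have "\<dots> = (\<Sum>k\<in>{0..<NL}. if k = NL - 1 then E (NL+1) NL * B $$ (NL - 1, j) else 0)"
      proof (rule sum.cong)
        fix k assume k: "k \<in> {0..<NL}"
        show "A_IL $$ (0,k) * B $$ (k, j) = (if k = NL - 1 then E (NL+1) NL * B $$ (NL - 1, j) else 0)"
          using AIL[of k] k Ezero[of k NL] NL by (cases "k = NL - 1") simp_all
      qed simp
      also have "\<dots> = E (NL+1) NL * B $$ (NL - 1, j)" using NL by simp
      finally show ?thesis .
    qed
    define C where "C = A_IL * B"
    have Cc: "C \<in> carrier_mat NI NL" using AILc Bc by (simp add: C_def)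
    have "(A_IL * B * A_LI) $$ (0, 0) = (C * A_LI) $$ (0, 0)" by (simp add: C_def)
    also have "\<dots> = (\<Sum>j\<in>{0..<NL}. C $$ (0,j) * A_LI $$ (j, 0))"
      using Cc ALIc NI by (simp add: scalar_prod_def)
    also have "\<dots> = (\<Sum>j\<in>{0..<NL}. (A_IL * B) $$ (0,j) * A_LI $$ (j, 0))" by (simp add: C_def)
    also have "\<dots> = (\<Sum>j\<in>{0..<NL}. if j = NL - 1 then E (NL+1) NL * B $$ (NL - 1, NL - 1) * E NL (NL+1) else 0)"
    proof (rule sum.cong)
      fix j assume j: "j \<in> {0..<NL}"
      show "(A_IL * B) $$ (0,j) * A_LI $$ (j, 0) = (if j = NL - 1 then E (NL+1) NL * B $$ (NL - 1, NL - 1) * E NL (NL+1) else 0)"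
        using ALI[of j] ILB[of j] j Ezero[of NL j] NL by (cases "j = NL - 1") simp_all
    qed simp
    also have "\<dots> = lf (NL + 1) * (uf NL / p (NL - 1))" unfolding EL EU yl using NL by simp
    also have "\<dots> \<le> lf (NL + 1)" using pl ul ll
      using mult_left_mono[of "uf NL / p (NL - 1)" 1 "lf (NL+1)"] by simp
    finally have "(A_IL * B * A_LI) $$ (0, 0) \<le> \<bar>E (NL + 1) NL\<bar>" using EL ll by simp
    moreover have "A_IL $$ (0, NL - 1) = E (NL + 1) NL" using AIL[of "NL - 1"] NL by simp
    ultimately show ?thesis by simp
  qed
  show ?thesis
  proof (intro conjI allI impI)
    show "invertible_mat A_LL" by (rule inv)
  next
    fix B assume "inverts_mat A_LL B \<and> inverts_mat B A_LL"
    then have "A_LL * B = 1\<^sub>m (dim_row A_LL)" "B * A_LL = 1\<^sub>m (dim_row B)"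
      unfolding inverts_mat_def by auto
    note mB = main[OF this]
    from mB show "(A_IL * B * A_LI) $$ (0, 0) \<le> \<bar>upwind_entry eps c r x (NL + 1) NL\<bar>"
      unfolding E_def by simp
    from mB show "\<bar>upwind_entry eps c r x (NL + 1) NL\<bar> = \<bar>A_IL $$ (0, NL - 1)\<bar>"
      unfolding E_def by simp
  qed
qed

end
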